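(* Let $q\ge5$ be even. (i) If $q=2^{2m+1}$, then $V_2=0$ and $V_1=q/2$. (ii) If $q=2^{2m}$, then $V_2=0$ and $V_1=\mathcal T_q$.
   Context: For $m'\in\{0,1,2,3\}$, $V_{m'}$ is the number of $\beta\in\mathbb F_q$ such that the cubic equation $t^3-3\beta t^2-1=0$ (in characteristic $2$: $t^3+\beta t^2+1=0$) has exactly $m'$ distinct solutions $t\in\mathbb F_q$. $\mathrm{Tr}_2$ denotes the absolute trace $\mathbb F_q\to\mathbb F_2$, and for $q=2^{2m}$, $\mathcal T_q=\#\{\beta\in\mathbb F_q:\mathrm{Tr}_2(\beta^3)=1\}$. *)

theory Defs
  imports Main "HOL-Library.Cardinality"
begin

definition cubic_roots :: "'a::{field,finite} \<Rightarrow> nat" where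
  "cubic_roots b = card {t::'a. t^3 + b * t^2 + 1 = 0}"

definition V :: "nat \<Rightarrow> 'a::{field,finite} itself \<Rightarrow> nat" where
  "V k _ = card {b::'a. cubic_roots b = k}"

text \<open>Absolute trace F_q \<rightarrow> F_2 for q = 2^n, values 0/1 viewed inside F_q.\<close>
definition tr2 :: "nat \<Rightarrow> 'a::field \<Rightarrow> 'a" where
  "tr2 n x = (\<Sum>i<n. x ^ (2 ^ i))"

definition T_count :: "nat \<Rightarrow> 'a::{field,finite} itself \<Rightarrow> nat" where
  "T_count n _ = card {b::'a. tr2 n (b^3) = 1}"

end

theory Submission
  imports Defs "HOL-Computational_Algebra.Polynomial"
begin

lemma c2_neg: "(2::'a::field) = 0 \<Longrightarrow> - x = (x::'a)"
  by (metis add_eq_0_iff mult_2 mult_zero_left)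

lemma c2_add: "(2::'a::field) = 0 \<Longrightarrow> x + x = (0::'a)"
  by (metis mult_2 mult_zero_left)

lemma c2_eq: "(2::'a::field) = 0 \<Longrightarrow> (x + y = (0::'a)) = (x = y)"
  by (metis add_eq_0_iff c2_neg)

lemma root_split:
  fixes b r t :: "'a::field"
  assumes c2: "(2::'a) = 0" and r: "r^3 + b*r^2 + 1 = 0"
  shows "r^2 * (t^3 + b*t^2 + 1) = (t + r) * (r^2*t^2 + t + r)"
proof -
  have "b*r^2 = r^3 + 1" using r c2 by (metis add_eq_0_iff c2_neg add.commute add.left_commute)
  have "r^2 * (t^3 + b*t^2 + 1) - (t + r) * (r^2*t^2 + t + r) = t^2*(b*r^2 - r^3 - 1) - 2*r*t"
    by algebra
  also have "\<dots> = 0" using \<open>b*r^2 = r^3 + 1\<close> c2 by simp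
  finally show ?thesis by simp
qed

lemma fiber2:
  assumes "finite A" and "\<And>c. c \<in> f ` A \<Longrightarrow> card {x\<in>A. f x = c} = 2"
  shows "card A = 2 * card (f ` A)"
proof -
  have "card A = (\<Sum>y\<in>f ` A. card {x\<in>A. f x = y})"
    using sum.group[of A "f ` A" f "\<lambda>_. 1::nat"] assms(1) by simp
  also have "\<dots> = (\<Sum>y\<in>f ` A. 2)" using assms(2) by simp
  finally show ?thesis by simp
qed

lemma Q_eq:
  fixes w0 :: "'a::field"
  assumes c2: "(2::'a) = 0"
  shows "{w. w^2 + w = w0^2 + w0} = {w0, w0+1}"
proof -
  have "w^2 + w = w0^2 + w0 \<longleftrightarrow> w = w0 \<or> w = w0 + 1" for w
  proof -
    have "w^2 + w - (w0^2 + w0) = (w - w0) * (w - w0 - 1) + 2*(w - w0^2 - w0 + w*w0)"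
      by algebra
    then have eq: "w^2 + w - (w0^2 + w0) = (w - w0) * (w - w0 - 1)" using c2 by simp
    have "w^2 + w = w0^2 + w0 \<longleftrightarrow> (w - w0) * (w - w0 - 1) = 0"
      by (metis eq eq_iff_diff_eq_0)
    then show ?thesis by (simp add: diff_diff_eq)
  qed
  then show ?thesis by auto
qed

lemma Q_card:
  fixes c :: "'a::{field,finite}"
  assumes c2: "(2::'a) = 0"
  shows "card {w. w^2 + w = c} = (if c \<in> range (\<lambda>w. w^2+w) then 2 else 0)"
proof (cases "c \<in> range (\<lambda>w. w^2+w)")
  case True
  then obtain w0 where w0: "c = w0^2 + w0" by auto
  have "w0 \<noteq> w0 + 1" by simp
  then show ?thesis using Q_eq[OF c2, of w0] True w0 by simp
next
  case False
  then have "{w. w^2 + w = c} = {}" by auto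
  then show ?thesis using False by simp
qed

lemma card_S:
  assumes c2: "(2::'a::{field,finite}) = 0"
  shows "CARD('a) = 2 * card (range (\<lambda>w::'a. w^2+w))"
proof (rule fiber2)
  fix c assume "c \<in> range (\<lambda>w::'a. w^2+w)"
  then show "card {x \<in> UNIV. x^2 + x = c} = 2" using Q_card[OF c2, of c] by simp
qed simp

lemma fermat:
  fixes x :: "'a::{field,finite}"
  shows "x ^ CARD('a) = x"
proof (cases "x = 0")
  case True then show ?thesis by simp
next
  case False
  let ?U = "UNIV - {0::'a}"
  have img: "((*) x) ` ?U = ?U"
  proof
    show "((*) x) ` ?U \<subseteq> ?U" using False by auto
    show "?U \<subseteq> ((*) x) ` ?U"
    proof
      fix y assume "y \<in> ?U"
      then have "y = x * (y / x)" "y / x \<in> ?U" using False by auto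
      then show "y \<in> ((*) x) ` ?U" by blast
    qed
  qed
  have inj: "inj_on ((*) x) ?U" using False by (auto intro: inj_onI)
  have "(\<Prod>y\<in>?U. y) = (\<Prod>y\<in>?U. x*y)"
    using prod.reindex[OF inj, of "\<lambda>y. y"] img by simp
  also have "\<dots> = x ^ card ?U * (\<Prod>y\<in>?U. y)" by (simp add: prod.distrib)
  finally have "x ^ card ?U = 1"
    using prod_zero_iff[of ?U "\<lambda>y. y"] by auto
  moreover have "card ?U = CARD('a) - 1" by (simp add: card_Diff_singleton)
  moreover have "CARD('a) = Suc (CARD('a) - 1)" using finite_UNIV_card_ge_0 by simp
  ultimately show ?thesis by (metis mult.right_neutral power_Suc)
qed

lemma char_card: "of_nat CARD('a) = (0::'a::{ring_1,finite})"
proof -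
  have inj: "inj (\<lambda>y::'a. y + 1)" by (auto intro: injI)
  have img: "range (\<lambda>y::'a. y + 1) = UNIV"
    by (metis diff_add_cancel surj_def)
  have "(\<Sum>y\<in>UNIV. y) = (\<Sum>y\<in>UNIV. (y::'a) + 1)"
    using sum.reindex[OF inj, of "\<lambda>y. y"] img by simp
  also have "\<dots> = (\<Sum>y\<in>UNIV. y) + of_nat CARD('a)" by (simp add: sum.distrib)
  finally show ?thesis by simp
qed


lemma frob_add:
  fixes x y :: "'a::field"
  assumes c2: "(2::'a) = 0"
  shows "(x + y)^(2^i) = x^(2^i) + y^(2^i)"
proof (induction i)
  case 0 then show ?case by simp
next
  case (Suc i)
  have "(x + y)^(2^Suc i) = ((x+y)^(2^i))^2" by (simp add: power_mult[symmetric] mult.commute)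
  also have "\<dots> = (x^(2^i) + y^(2^i))^2" using Suc by simp
  also have "\<dots> = (x^(2^i))^2 + (y^(2^i))^2" using c2 by (simp add: power2_sum)
  also have "\<dots> = x^(2^Suc i) + y^(2^Suc i)" by (simp add: power_mult[symmetric] mult.commute)
  finally show ?case .
qed

lemma sq_sum:
  fixes a :: "nat \<Rightarrow> 'a::field"
  assumes c2: "(2::'a) = 0"
  shows "(\<Sum>i<n. a i)^2 = (\<Sum>i<n. (a i)^2)"
proof (induction n)
  case 0 then show ?case by simp
next
  case (Suc n)
  then show ?case using c2 by (simp add: power2_sum)
qed

lemma tr_add:
  assumes c2: "(2::'a::field) = 0"
  shows "tr2 n (x + y) = tr2 n x + tr2 n (y::'a)"
  unfolding tr2_def by (simp add: frob_add[OF c2] sum.distrib)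

lemma tr_sq:
  fixes x :: "'a::{field,finite}"
  assumes c2: "(2::'a) = 0" and q: "CARD('a) = 2^n"
  shows "tr2 n (x^2) = tr2 n x" and "(tr2 n x)^2 = tr2 n x"
proof -
  let ?f = "\<lambda>i. x^(2^i)"
  have e: "(x^2)^(2^i) = ?f (Suc i)" for i by (simp add: power_mult[symmetric] mult.commute)
  have a: "(\<Sum>i<Suc n. ?f i) = ?f 0 + (\<Sum>i<n. ?f (Suc i))" by (rule sum.lessThan_Suc_shift)
  have b: "(\<Sum>i<Suc n. ?f i) = (\<Sum>i<n. ?f i) + ?f n" by (rule sum.lessThan_Suc)
  have c: "?f n = ?f 0" using fermat[of x] q by simp
  have d: "(\<Sum>i<n. ?f (Suc i)) = (\<Sum>i<n. ?f i)" using a b c by simp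
  have "tr2 n (x^2) = (\<Sum>i<n. ?f (Suc i))" unfolding tr2_def e by simp
  also have "\<dots> = tr2 n x" unfolding tr2_def by (rule d)
  finally show 1: "tr2 n (x^2) = tr2 n x" .
  have "(tr2 n x)^2 = (\<Sum>i<n. (x^(2^i))^2)" unfolding tr2_def by (rule sq_sum[OF c2])
  also have "\<dots> = tr2 n (x^2)" unfolding tr2_def
    by (simp add: power_mult[symmetric] mult.commute)
  finally show "(tr2 n x)^2 = tr2 n x" using 1 by simp
qed

lemma tr_01:
  fixes x :: "'a::{field,finite}"
  assumes c2: "(2::'a) = 0" and q: "CARD('a) = 2^n"
  shows "tr2 n x = 0 \<or> tr2 n x = 1"
proof -
  have "tr2 n x * (tr2 n x - 1) = 0" using tr_sq(2)[OF c2 q, of x]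
    by (simp add: algebra_simps power2_eq_square)
  then show ?thesis by simp
qed

lemma ker_bound:
  fixes dummy :: "'a::{field,finite}"
  assumes n: "n \<ge> 1"
  shows "card {x::'a. tr2 n x = 0} \<le> 2^(n-1)"
proof -
  define P :: "'a poly" where "P = (\<Sum>i<n. monom 1 (2^i))"
  have ev: "poly P x = tr2 n x" for x unfolding P_def tr2_def by (simp add: poly_sum poly_monom)
  have deg: "degree P \<le> 2^(n-1)" unfolding P_def
  proof (rule degree_sum_le)
    fix i assume "i \<in> {..<n}"
    then have "(2::nat)^i \<le> 2^(n-1)" by (intro power_increasing) auto
    then show "degree (monom (1::'a) (2^i)) \<le> 2^(n-1)" by (simp add: degree_monom_eq)
  qed simp
  have "coeff P (2^(n-1)) = (\<Sum>i<n. if i = n - 1 then 1 else 0)"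
    unfolding P_def by (simp add: coeff_sum coeff_monom power_inject_exp)
  also have "\<dots> = 1" using n by simp
  finally have "P \<noteq> 0" by auto
  then have "card {x. poly P x = 0} \<le> degree P" by (rule card_poly_roots_bound)
  then show ?thesis using deg ev by simp
qed

lemma ker_eq:
  fixes dummy :: "'a::{field,finite}"
  assumes c2: "(2::'a) = 0" and q: "CARD('a) = 2^n" and n: "n \<ge> 1"
  shows "range (\<lambda>w::'a. w^2+w) = {x::'a. tr2 n x = 0}"
proof (rule card_seteq)
  show "finite {x::'a. tr2 n x = 0}" by simp
  show "range (\<lambda>w::'a. w^2+w) \<subseteq> {x::'a. tr2 n x = 0}"
    using tr_add[OF c2] tr_sq(1)[OF c2 q] c2_add[OF c2] by auto
  have "2 * card (range (\<lambda>w::'a. w^2+w)) = 2 * 2^(n-1)"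
    using card_S[OF c2] q n by (metis One_nat_def Suc_pred' less_le_trans not_less_eq_eq power_Suc zero_less_one)
  then show "card {x::'a. tr2 n x = 0} \<le> card (range (\<lambda>w::'a. w^2+w))"
    using ker_bound[OF n] by simp
qed


lemma roots_eq:
  fixes b r :: "'a::field"
  assumes c2: "(2::'a) = 0" and r: "r^3 + b*r^2 + 1 = 0"
  shows "r \<noteq> 0" and "{t. t^3 + b*t^2 + 1 = 0} = insert r {t. r^2*t^2 + t + r = 0}"
    and "r \<notin> {t. r^2*t^2 + t + r = 0}"
proof -
  show rn: "r \<noteq> 0" using r by auto
  have "t^3 + b*t^2 + 1 = 0 \<longleftrightarrow> t = r \<or> r^2*t^2 + t + r = 0" for t
  proof -
    have "t^3 + b*t^2 + 1 = 0 \<longleftrightarrow> r^2 * (t^3 + b*t^2 + 1) = 0" using rn by simp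
    also have "\<dots> \<longleftrightarrow> (t + r) * (r^2*t^2 + t + r) = 0" using root_split[OF c2 r] by simp
    also have "\<dots> \<longleftrightarrow> t = r \<or> r^2*t^2 + t + r = 0" using c2_eq[OF c2] by simp
    finally show ?thesis .
  qed
  then show "{t. t^3 + b*t^2 + 1 = 0} = insert r {t. r^2*t^2 + t + r = 0}" by auto
  have "r^2*r^2 + r + r = r^4" using c2_add[OF c2, of r] by (simp add: power_add[symmetric] add.assoc)
  then show "r \<notin> {t. r^2*t^2 + t + r = 0}" using rn by simp
qed

lemma card_L:
  fixes r :: "'a::{field,finite}"
  assumes c2: "(2::'a) = 0" and rn: "r \<noteq> 0"
  shows "card {t. r^2*t^2 + t + r = 0} = card {w. w^2 + w = r^3}"
proof (rule bij_betw_same_card)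
  show "bij_betw (\<lambda>t. r^2*t) {t. r^2*t^2 + t + r = 0} {w. w^2 + w = r^3}"
  proof (rule bij_betw_byWitness[where f'="\<lambda>w. w / r^2"])
    show "\<forall>a\<in>{t. r^2*t^2 + t + r = 0}. r^2*a / r^2 = a" using rn by simp
    show "\<forall>a\<in>{w. w^2 + w = r^3}. r^2*(a / r^2) = a" using rn by simp
    show "(\<lambda>t. r^2*t) ` {t. r^2*t^2 + t + r = 0} \<subseteq> {w. w^2 + w = r^3}"
    proof clarify
      fix t assume h: "r^2*t^2 + t + r = 0"
      have "(r^2*t)^2 + r^2*t = r^2 * (r^2*t^2 + t + r) - r^3"
        by (simp add: algebra_simps power2_eq_square power3_eq_cube)
      then show "(r^2*t)^2 + r^2*t = r^3" using h c2_neg[OF c2] by simp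
    qed
    show "(\<lambda>w. w / r^2) ` {w. w^2 + w = r^3} \<subseteq> {t. r^2*t^2 + t + r = 0}"
    proof clarify
      fix w assume h: "w^2 + w = r^3"
      have "r^2*(w/r^2)^2 + w/r^2 + r = (w^2 + w + r^3) / r^2"
        using rn by (simp add: field_simps power2_eq_square power3_eq_cube)
      also have "\<dots> = 0" using h c2_add[OF c2, of "r^3"] by simp
      finally show "r^2*(w/r^2)^2 + w/r^2 + r = 0" .
    qed
  qed
qed

lemma cubic_roots_root:
  fixes b r :: "'a::{field,finite}"
  assumes c2: "(2::'a) = 0" and r: "r^3 + b*r^2 + 1 = 0"
  shows "cubic_roots b = (if r^3 \<in> range (\<lambda>w::'a. w^2+w) then 3 else 1)"
proof -
  have "cubic_roots b = Suc (card {t. r^2*t^2 + t + r = 0})"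
    unfolding cubic_roots_def roots_eq(2)[OF c2 r] using roots_eq(3)[OF c2 r] by simp
  also have "\<dots> = Suc (card {w. w^2 + w = r^3})" using card_L[OF c2 roots_eq(1)[OF c2 r]] by simp
  finally show ?thesis using Q_card[OF c2, of "r^3"] by simp
qed

lemma V2_zero:
  assumes c2: "(2::'a::{field,finite}) = 0"
  shows "V 2 (F::'a itself) = 0"
proof -
  have "cubic_roots b \<noteq> 2" for b :: 'a
  proof (cases "{t::'a. t^3 + b*t^2 + 1 = 0} = {}")
    case True then show ?thesis unfolding cubic_roots_def by simp
  next
    case False
    then obtain r where "r^3 + b*r^2 + 1 = 0" by auto
    then have "cubic_roots b = (if r^3 \<in> range (\<lambda>w::'a. w^2+w) then 3 else 1)"
      by (rule cubic_roots_root[OF c2])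
    then show ?thesis by simp
  qed
  then show ?thesis unfolding V_def by simp
qed

lemma V1_eq:
  assumes c2: "(2::'a::{field,finite}) = 0"
  shows "V 1 (F::'a itself) = card {r::'a. r^3 \<notin> range (\<lambda>w::'a. w^2+w)}"
proof -
  let ?S = "range (\<lambda>w::'a. w^2+w)"
  let ?A = "{r::'a. r^3 \<notin> ?S}"
  let ?g = "\<lambda>r::'a. (r^3 + 1) / r^2"
  have A0: "r \<noteq> 0" if "r \<in> ?A" for r
  proof
    assume "r = 0"
    then have "r^3 = 0^2 + 0" by simp
    then show False using that by blast
  qed
  have groot: "r^3 + ?g r * r^2 + 1 = 0" if "r \<noteq> 0" for r
    using that c2_add[OF c2, of "r^3 + 1"] by (simp add: add.assoc add.left_commute)
  have inj: "inj_on ?g ?A"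
  proof (rule inj_onI)
    fix r r' assume rA: "r \<in> ?A" and r'A: "r' \<in> ?A" and eq: "?g r = ?g r'"
    have rr: "r^3 + ?g r * r^2 + 1 = 0" using groot A0 rA by blast
    have "r'^3 + ?g r * r'^2 + 1 = 0" using eq groot A0 r'A by metis
    then have "r' \<in> insert r {t. r^2*t^2 + t + r = 0}" using roots_eq(2)[OF c2 rr] by blast
    moreover have "card {t. r^2*t^2 + t + r = 0} = 0"
      using card_L[OF c2 A0[OF rA]] Q_card[OF c2, of "r^3"] rA by simp
    ultimately show "r = r'" by simp
  qed
  have img: "{b. cubic_roots b = 1} = ?g ` ?A"
  proof
    show "?g ` ?A \<subseteq> {b. cubic_roots b = 1}"
      using cubic_roots_root[OF c2 groot] A0 by auto
    show "{b. cubic_roots b = 1} \<subseteq> ?g ` ?A"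
    proof
      fix b assume "b \<in> {b::'a. cubic_roots b = 1}"
      then have c1: "cubic_roots b = 1" by simp
      have "{t::'a. t^3 + b*t^2 + 1 = 0} \<noteq> {}"
      proof
        assume e: "{t::'a. t^3 + b*t^2 + 1 = 0} = {}"
        have "cubic_roots b = 0" unfolding cubic_roots_def e by simp
        then show False using c1 by simp
      qed
      then obtain r where r: "r^3 + b*r^2 + 1 = 0" by auto
      have "r^3 \<notin> ?S"
      proof
        assume "r^3 \<in> ?S"
        then have "cubic_roots b = 3" using cubic_roots_root[OF c2 r] by simp
        then show False using c1 by simp
      qed
      then have rA: "r \<in> ?A" by simp
      have rn: "r \<noteq> 0" using roots_eq(1)[OF c2 r] .
      have "b*r^2 = r^3 + 1" using r c2 by (metis add_eq_0_iff c2_neg add.commute add.left_commute)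
      then have "b = ?g r" using rn by (simp add: field_simps)
      then show "b \<in> ?g ` ?A" using rA by blast
    qed
  qed
  show ?thesis unfolding V_def img using card_image[OF inj] by simp
qed



lemma char2_of:
  assumes q: "CARD('a::{field,finite}) = 2^k"
  shows "(2::'a) = 0"
proof -
  have "k \<noteq> 0"
  proof
    assume "k = 0"
    then have "CARD('a) = 1" using q by simp
    moreover have "card {0::'a, 1} \<le> CARD('a)" by (intro card_mono) auto
    ultimately show False by simp
  qed
  have "(2::'a)^k = of_nat CARD('a)" using q by simp
  also have "\<dots> = 0" by (rule char_card)
  finally show ?thesis by simp
qed

lemma cube_inj:
  assumes q: "CARD('a::{field,finite}) = 2^(2*m+1)"
  shows "inj (\<lambda>r::'a. r^3)"
proof (rule injI)
  fix r s :: 'a assume eq: "r^3 = s^3"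
  show "r = s"
  proof (cases "s = 0")
    case True then show ?thesis using eq by simp
  next
    case False
    define x where "x = r / s"
    have x3: "x^3 = 1" using eq False unfolding x_def by (simp add: power_divide)
    have a: "(4::nat)^m mod 3 = 1" by (induction m) (auto simp: mod_mult_right_eq[symmetric] mult_mod_right)
    have "(2::nat)^(2*m+1) = 2 * 4^m" by (simp add: power_mult)
    then have "(2::nat)^(2*m+1) mod 3 = 2" using a
      by (metis mod_mult_right_eq numeral_Bit0 mult_2 add_2_eq_Suc' mod_less numeral_2_eq_2 lessI  mult.right_neutral Suc_1 eval_nat_numeral(3) less_Suc_eq)
    then obtain k where k: "(2::nat)^(2*m+1) = 3*k + 2" by (metis div_mod_decomp mult.commute)
    have "x = x^CARD('a)" by (simp add: fermat)
    also have "\<dots> = (x^3)^k * x^2" unfolding q k by (simp only: power_add power_mult)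
    also have "\<dots> = x^2" using x3 by simp
    finally have "x = x^2" .
    moreover have "x \<noteq> 0" using x3 by auto
    ultimately have "x = 1" by (simp add: power2_eq_square)
    then show ?thesis using False unfolding x_def by simp
  qed
qed


theorem lemma4p5:
  fixes F :: "'a::{field,finite} itself"
  assumes "even CARD('a)" and "CARD('a) \<ge> 5"
  shows "(\<forall>m. CARD('a) = 2^(2*m+1) \<longrightarrow>
            V 2 F = 0 \<and> V 1 F = CARD('a) div 2)
       \<and> (\<forall>m. CARD('a) = 2^(2*m) \<longrightarrow>
            V 2 F = 0 \<and> V 1 F = T_count (2*m) F)"
proof (intro conjI allI impI)
  fix m assume q: "CARD('a) = 2^(2*m+1)"
  have c2: "(2::'a) = 0" by (rule char2_of[OF q])
  show "V 2 F = 0" by (rule V2_zero[OF c2])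
  let ?S = "range (\<lambda>w::'a. w^2+w)"
  have inj: "inj (\<lambda>r::'a. r^3)" by (rule cube_inj[OF q])
  have surj: "surj (\<lambda>r::'a. r^3)" using inj by (simp add: finite_UNIV_inj_surj)
  have "V 1 F = card ((\<lambda>r::'a. r^3) -` (- ?S))" unfolding V1_eq[OF c2] by (simp add: vimage_def)
  also have "\<dots> = card (- ?S)" using card_vimage_inj[OF inj] surj by simp
  also have "\<dots> = card (UNIV - ?S)" by (simp add: Compl_eq_Diff_UNIV)
  also have "\<dots> = CARD('a) - card ?S" by (rule card_Diff_subset) auto
  also have "\<dots> = CARD('a) div 2" using card_S[OF c2] by simp
  finally show "V 1 F = CARD('a) div 2" .
next
  fix m assume q: "CARD('a) = 2^(2*m)"
  have c2: "(2::'a) = 0" by (rule char2_of[OF q])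
  show "V 2 F = 0" by (rule V2_zero[OF c2])
  have "m \<noteq> 0"
  proof
    assume "m = 0"
    then have "CARD('a) = 1" using q by simp
    then show False using assms(2) by simp
  qed
  then have n: "2*m \<ge> 1" by simp
  have "{r::'a. r^3 \<notin> range (\<lambda>w::'a. w^2+w)} = {r. tr2 (2*m) (r^3) = 1}"
  proof (rule Collect_cong)
    fix r :: 'a
    have "r^3 \<notin> range (\<lambda>w::'a. w^2+w) \<longleftrightarrow> tr2 (2*m) (r^3) \<noteq> 0"
      using ker_eq[OF c2 q n] by simp
    also have "\<dots> \<longleftrightarrow> tr2 (2*m) (r^3) = 1" using tr_01[OF c2 q, of "r^3"] by auto
    finally show "r^3 \<notin> range (\<lambda>w::'a. w^2+w) \<longleftrightarrow> tr2 (2*m) (r^3) = 1" .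
  qed
  then show "V 1 F = T_count (2*m) F" unfolding V1_eq[OF c2] T_count_def by simp
qed

end
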